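(* Let $I$ be a linearly ordered set, $(\mathcal{A}_i,\phi_i)_{i\in I}$ noncommutative probability spaces, and let $\psi:\bigsqcup_{i\in I}\mathcal{A}_i\to\mathbb{C}$ be the linear functional on the free product without identification of units such that $\psi|_{\mathcal{A}_i}=\phi_i$ for each $i$, $\psi(a_1a_2\cdots a_n)=0$ whenever $a_k\in\mathcal{A}_{i_k}\cap\mathrm{Ker}\,\phi_{i_k}$ and $i_1\ne i_2\ne\cdots\ne i_n$, and $$\psi(a_1\cdots a_{k-1}1_{i_k}a_{k+1}\cdots a_n)=\begin{cases}\psi(a_1\cdots a_{k-1}a_{k+1}\cdots a_n)&\text{if } i_1<i_2<\cdots<i_k,\\ 0&\text{otherwise,}\end{cases}$$ for $1\le k\le n$, where $a_j\in\mathcal{A}_{i_j}\cap\mathrm{Ker}\,\phi_{i_j}$ for $j<k$, $a_j\in\mathcal{A}_{i_j}$ arbitrary for $j>k$, and $1_{i_k}$ is the unit of $\mathcal{A}_{i_k}$ (the empty word having value $1$). Then $\psi$ agrees with the monotone product of the states $\phi_i$, i.e. $\psi(a_1\cdots a_n)=\phi_{i_k}(a_k)\,\psi(a_1\cdots a_{k-1}a_{k+1}\cdots a_n)$ for all $a_j\in\mathcal{A}_{i_j}$ with neighboring elements from different algebras and $i_{k-1}<i_k>i_{k+1}$ (only one inequality if $k\in\{1,n\}$).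
   Context: A noncommutative probability space $(\mathcal{A},\phi)$ is a unital $*$-algebra with a state. $\bigsqcup_{i\in I}\mathcal{A}_i$ denotes the free product of the algebras $\mathcal{A}_i$ in which the units $1_i$ of the different $\mathcal{A}_i$ are not identified. The monotone product of states $\phi_i$ is the state $\phi$ on $\bigsqcup_i\mathcal{A}_i$ given by $\phi(a_1\cdots a_{k-1}a_ka_{k+1}\cdots a_n)=\phi_{i_k}(a_k)\phi(a_1\cdots a_{k-1}a_{k+1}\cdots a_n)$ for $a_j\in\mathcal{A}_{i_j}$ whenever neighboring variables come from different algebras and $i_{k-1}<i_k>i_{k+1}$ (with only one inequality if $k\in\{1,n\}$). *)

theory Defs
  imports Complex_Main
begin

text \<open>A unital complex *-algebra given explicitly on a carrier set inside an ambient type.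
  Using explicit structures lets a whole family of (different) algebras live in one type.\<close>

record 'a star_alg =
  carr :: "'a set"
  add  :: "'a \<Rightarrow> 'a \<Rightarrow> 'a"
  smul :: "complex \<Rightarrow> 'a \<Rightarrow> 'a"
  zer  :: 'a
  mul  :: "'a \<Rightarrow> 'a \<Rightarrow> 'a"
  one  :: 'a
  star :: "'a \<Rightarrow> 'a"

definition unital_star_algebra :: "'a star_alg \<Rightarrow> bool" where
  "unital_star_algebra A \<longleftrightarrow>
     zer A \<in> carr A \<and> one A \<in> carr A \<and>
     (\<forall>x\<in>carr A. \<forall>y\<in>carr A. add A x y \<in> carr A \<and> mul A x y \<in> carr A) \<and>
     (\<forall>c. \<forall>x\<in>carr A. smul A c x \<in> carr A) \<and>
     (\<forall>x\<in>carr A. star A x \<in> carr A) \<and>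
     \<comment> \<open>complex vector space\<close>
     (\<forall>x\<in>carr A. \<forall>y\<in>carr A. \<forall>z\<in>carr A. add A (add A x y) z = add A x (add A y z)) \<and>
     (\<forall>x\<in>carr A. \<forall>y\<in>carr A. add A x y = add A y x) \<and>
     (\<forall>x\<in>carr A. add A (zer A) x = x) \<and>
     (\<forall>x\<in>carr A. add A x (smul A (-1) x) = zer A) \<and>
     (\<forall>x\<in>carr A. smul A 1 x = x) \<and>
     (\<forall>c d. \<forall>x\<in>carr A. smul A c (smul A d x) = smul A (c * d) x) \<and>
     (\<forall>c d. \<forall>x\<in>carr A. smul A (c + d) x = add A (smul A c x) (smul A d x)) \<and>
     (\<forall>c. \<forall>x\<in>carr A. \<forall>y\<in>carr A. smul A c (add A x y) = add A (smul A c x) (smul A c y)) \<and>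
     \<comment> \<open>associative bilinear multiplication with unit\<close>
     (\<forall>x\<in>carr A. \<forall>y\<in>carr A. \<forall>z\<in>carr A. mul A (mul A x y) z = mul A x (mul A y z)) \<and>
     (\<forall>x\<in>carr A. \<forall>y\<in>carr A. \<forall>z\<in>carr A.
        mul A x (add A y z) = add A (mul A x y) (mul A x z) \<and>
        mul A (add A x y) z = add A (mul A x z) (mul A y z)) \<and>
     (\<forall>c. \<forall>x\<in>carr A. \<forall>y\<in>carr A.
        mul A (smul A c x) y = smul A c (mul A x y) \<and> mul A x (smul A c y) = smul A c (mul A x y)) \<and>
     (\<forall>x\<in>carr A. mul A (one A) x = x \<and> mul A x (one A) = x) \<and>
     \<comment> \<open>involution\<close>
     (\<forall>x\<in>carr A. star A (star A x) = x) \<and>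
     (\<forall>x\<in>carr A. \<forall>y\<in>carr A. star A (add A x y) = add A (star A x) (star A y)) \<and>
     (\<forall>c. \<forall>x\<in>carr A. star A (smul A c x) = smul A (cnj c) (star A x)) \<and>
     (\<forall>x\<in>carr A. \<forall>y\<in>carr A. star A (mul A x y) = mul A (star A y) (star A x))"

definition is_state :: "'a star_alg \<Rightarrow> ('a \<Rightarrow> complex) \<Rightarrow> bool" where
  "is_state A \<phi> \<longleftrightarrow>
     (\<forall>x\<in>carr A. \<forall>y\<in>carr A. \<phi> (add A x y) = \<phi> x + \<phi> y) \<and>
     (\<forall>c. \<forall>x\<in>carr A. \<phi> (smul A c x) = c * \<phi> x) \<and>
     \<phi> (one A) = 1 \<and>
     (\<forall>x\<in>carr A. Im (\<phi> (mul A (star A x) x)) = 0 \<and> Re (\<phi> (mul A (star A x) x)) \<ge> 0)"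

definition nc_prob_space :: "'a star_alg \<Rightarrow> ('a \<Rightarrow> complex) \<Rightarrow> bool" where
  "nc_prob_space A \<phi> \<longleftrightarrow> unital_star_algebra A \<and> is_state A \<phi>"

text \<open>Words in the free product: a letter (i,a) stands for a \<in> A_i; the word [(i1,a1),...,(in,an)]
  stands for the product a1 ... an; the empty word is the unit of the free product.\<close>

definition valid_word :: "('i \<Rightarrow> 'a star_alg) \<Rightarrow> ('i \<times> 'a) list \<Rightarrow> bool" where
  "valid_word A w \<longleftrightarrow> (\<forall>(i,a)\<in>set w. a \<in> carr (A i))"

definition alternating :: "('i \<times> 'a) list \<Rightarrow> bool" where
  "alternating w \<longleftrightarrow> (\<forall>j. Suc j < length w \<longrightarrow> fst (w ! j) \<noteq> fst (w ! Suc j))"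

text \<open>A linear functional on the free product without identification of units
  (= tensor algebra over the direct sum of the A_i modulo a \<otimes> b = ab for a,b in the same A_i),
  described by its values on words: multilinear in each letter and compatible with
  multiplication of neighbouring letters from the same algebra.\<close>
definition free_prod_functional ::
  "('i \<Rightarrow> 'a star_alg) \<Rightarrow> (('i \<times> 'a) list \<Rightarrow> complex) \<Rightarrow> bool" where
  "free_prod_functional A \<psi> \<longleftrightarrow>
     (\<forall>u v i a b. valid_word A u \<longrightarrow> valid_word A v \<longrightarrow> a \<in> carr (A i) \<longrightarrow> b \<in> carr (A i) \<longrightarrow>
        \<psi> (u @ (i, add (A i) a b) # v) = \<psi> (u @ (i, a) # v) + \<psi> (u @ (i, b) # v)) \<and>
     (\<forall>u v i c a. valid_word A u \<longrightarrow> valid_word A v \<longrightarrow> a \<in> carr (A i) \<longrightarrow>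
        \<psi> (u @ (i, smul (A i) c a) # v) = c * \<psi> (u @ (i, a) # v)) \<and>
     (\<forall>u v i a b. valid_word A u \<longrightarrow> valid_word A v \<longrightarrow> a \<in> carr (A i) \<longrightarrow> b \<in> carr (A i) \<longrightarrow>
        \<psi> (u @ (i, a) # (i, b) # v) = \<psi> (u @ (i, mul (A i) a b) # v))"

end

theory Submission
  imports Defs
begin


lemma alt_Nil[simp]: "alternating []"
  unfolding alternating_def by simp

lemma alt_Cons: "alternating (x#w) \<longleftrightarrow> (w = [] \<or> fst x \<noteq> fst (hd w)) \<and> alternating w"
proof (cases w)
  case Nil then show ?thesis by (simp add: alternating_def)
next
  case (Cons y w')
  have "alternating (x#y#w') \<longleftrightarrow> fst x \<noteq> fst y \<and> alternating (y#w')"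
    unfolding alternating_def
  proof safe
    fix j assume "\<forall>j. Suc j < length (x # y # w') \<longrightarrow> fst ((x # y # w') ! j) \<noteq> fst ((x # y # w') ! Suc j)"
      "Suc j < length (y # w')" "fst ((y # w') ! j) = fst ((y # w') ! Suc j)"
    then show False by (metis Suc_less_eq length_Cons nth_Cons_Suc)
  next
    assume "\<forall>j. Suc j < length (x # y # w') \<longrightarrow> fst ((x # y # w') ! j) \<noteq> fst ((x # y # w') ! Suc j)"
      "fst x = fst y"
    then show False by (metis One_nat_def length_Cons less_Suc_eq_0_disj nth_Cons_0 nth_Cons_Suc zero_less_Suc)
  next
    fix j assume "fst x \<noteq> fst y" "\<forall>j. Suc j < length (y # w') \<longrightarrow> fst ((y # w') ! j) \<noteq> fst ((y # w') ! Suc j)"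
      "Suc j < length (x # y # w')" "fst ((x # y # w') ! j) = fst ((x # y # w') ! Suc j)"
    then show False by (cases j) auto
  qed
  then show ?thesis using Cons by simp
qed

lemma alt_append: "alternating (xs @ ys) \<longleftrightarrow> alternating xs \<and> alternating ys \<and>
   (xs = [] \<or> ys = [] \<or> fst (last xs) \<noteq> fst (hd ys))"
  by (induction xs) (auto simp: alt_Cons)

lemma alt_fst: "alternating w \<longleftrightarrow> (\<forall>j. Suc j < length (map fst w) \<longrightarrow> map fst w ! j \<noteq> map fst w ! Suc j)"
  unfolding alternating_def by simp

lemma alt_map: "map fst w = map fst w' \<Longrightarrow> alternating w = alternating w'"
  by (simp add: alt_fst)

lemma valid_Nil[simp]: "valid_word A []" by (simp add: valid_word_def)
lemma valid_Cons[simp]: "valid_word A ((i,a)#w) \<longleftrightarrow> a \<in> carr (A i) \<and> valid_word A w"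
  by (simp add: valid_word_def)
lemma valid_append[simp]: "valid_word A (xs @ ys) \<longleftrightarrow> valid_word A xs \<and> valid_word A ys"
  by (auto simp: valid_word_def)

lemma sorted_last: "sorted_wrt (<) (map fst (c :: ('i::linorder \<times> 'a) list)) \<Longrightarrow> c \<noteq> [] \<Longrightarrow>
   (\<forall>x\<in>set c. fst x < j) \<longleftrightarrow> fst (last c) < j"
proof (induction c rule: rev_induct)
  case (snoc x xs)
  show ?case
  proof (cases "xs = []")
    case True then show ?thesis by simp
  next
    case False
    have s: "sorted_wrt (<) (map fst xs)" "\<forall>y\<in>set xs. fst y < fst x"
      using snoc(2) by (auto simp: sorted_wrt_append)
    have "\<forall>y\<in>set xs. fst y < j" if xj: "fst x < j"
    proof
      fix y assume "y \<in> set xs"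
      then have "fst y < fst x" using s(2) by blast
      then show "fst y < j" using xj by (rule less_trans)
    qed
    then show ?thesis by auto
  qed
qed simp

lemma sorted_snoc_iff: "sorted_wrt (<) (map fst (c :: ('i::linorder \<times> 'a) list) @ [j]) \<longleftrightarrow> sorted_wrt (<) (map fst c) \<and> (c = [] \<or> fst (last c) < j)"
proof -
  have "sorted_wrt (<) (map fst c @ [j]) \<longleftrightarrow> sorted_wrt (<) (map fst c) \<and> (\<forall>x\<in>set c. fst x < j)"
    by (auto simp: sorted_wrt_append)
  then show ?thesis using sorted_last[of c j] by (cases "c = []") (simp, blast)
qed

locale mp =
  fixes A :: "'i::linorder \<Rightarrow> 'a star_alg"
    and \<phi> :: "'i \<Rightarrow> 'a \<Rightarrow> complex"
    and \<psi> :: "('i \<times> 'a) list \<Rightarrow> complex"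
  assumes ncps: "\<And>i. nc_prob_space (A i) (\<phi> i)"
    and lin: "free_prod_functional A \<psi>"
    and empty: "\<psi> [] = 1"
    and restr: "\<And>i a. a \<in> carr (A i) \<Longrightarrow> \<psi> [(i, a)] = \<phi> i a"
    and centered: "\<And>w. w \<noteq> [] \<Longrightarrow> valid_word A w \<Longrightarrow> alternating w \<Longrightarrow>
                     (\<forall>(j, a)\<in>set w. \<phi> j a = 0) \<Longrightarrow> \<psi> w = 0"
    and unit_rule: "\<And>u i v. valid_word A u \<Longrightarrow> valid_word A v \<Longrightarrow>
                     alternating (u @ (i, one (A i)) # v) \<Longrightarrow>
                     (\<forall>(j, a)\<in>set u. \<phi> j a = 0) \<Longrightarrow>
                     \<psi> (u @ (i, one (A i)) # v) =
                       (if sorted_wrt (<) (map fst u @ [i]) then \<psi> (u @ v) else 0)"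
begin

lemma alg: "unital_star_algebra (A i)" using ncps nc_prob_space_def by blast
lemma st: "is_state (A i) (\<phi> i)" using ncps nc_prob_space_def by blast

lemma U: "unital_star_algebra (A i)" by (rule alg)
lemma zer_carr: "zer (A i) \<in> carr (A i)" using U[of i] unfolding unital_star_algebra_def by (elim conjE) assumption
lemma one_carr[simp]: "one (A i) \<in> carr (A i)" using U[of i] unfolding unital_star_algebra_def by (elim conjE) assumption
lemma am_carr: "\<forall>x\<in>carr (A i). \<forall>y\<in>carr (A i). add (A i) x y \<in> carr (A i) \<and> mul (A i) x y \<in> carr (A i)"
  using U[of i] unfolding unital_star_algebra_def by (elim conjE) assumption
lemma sm_carr: "\<forall>c. \<forall>x\<in>carr (A i). smul (A i) c x \<in> carr (A i)"
  using U[of i] unfolding unital_star_algebra_def by (elim conjE) assumption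
lemma mul_carr[simp]: "x \<in> carr (A i) \<Longrightarrow> y \<in> carr (A i) \<Longrightarrow> mul (A i) x y \<in> carr (A i)"
  using am_carr by blast
lemma add_carr[simp]: "x \<in> carr (A i) \<Longrightarrow> y \<in> carr (A i) \<Longrightarrow> add (A i) x y \<in> carr (A i)"
  using am_carr by blast
lemma smul_carr[simp]: "x \<in> carr (A i) \<Longrightarrow> smul (A i) c x \<in> carr (A i)"
  using sm_carr by blast
lemma one_mul_all: "\<forall>x\<in>carr (A i). mul (A i) (one (A i)) x = x \<and> mul (A i) x (one (A i)) = x"
  using U[of i] unfolding unital_star_algebra_def by (elim conjE) assumption
lemma one_mul[simp]: "x \<in> carr (A i) \<Longrightarrow> mul (A i) (one (A i)) x = x"
  using one_mul_all by blast
lemma add_assoc: "\<forall>x\<in>carr (A i). \<forall>y\<in>carr (A i). \<forall>z\<in>carr (A i). add (A i) (add (A i) x y) z = add (A i) x (add (A i) y z)"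
  using U[of i] unfolding unital_star_algebra_def by (elim conjE) assumption
lemma add_comm: "\<forall>x\<in>carr (A i). \<forall>y\<in>carr (A i). add (A i) x y = add (A i) y x"
  using U[of i] unfolding unital_star_algebra_def by (elim conjE) assumption
lemma zer_add: "\<forall>x\<in>carr (A i). add (A i) (zer (A i)) x = x"
  using U[of i] unfolding unital_star_algebra_def by (elim conjE) assumption
lemma add_neg: "\<forall>x\<in>carr (A i). add (A i) x (smul (A i) (-1) x) = zer (A i)"
  using U[of i] unfolding unital_star_algebra_def by (elim conjE) assumption
lemma smul1: "\<forall>x\<in>carr (A i). smul (A i) 1 x = x"
  using U[of i] unfolding unital_star_algebra_def by (elim conjE) assumption
lemma smul_distr: "\<forall>c d. \<forall>x\<in>carr (A i). smul (A i) (c + d) x = add (A i) (smul (A i) c x) (smul (A i) d x)"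
  using U[of i] unfolding unital_star_algebra_def by (elim conjE) assumption

lemma smul0: assumes x: "x \<in> carr (A i)" shows "smul (A i) 0 x = zer (A i)"
proof -
  have "smul (A i) 0 x = smul (A i) (1 + -1) x" by simp
  also have "\<dots> = add (A i) (smul (A i) 1 x) (smul (A i) (-1) x)"
    using smul_distr x by blast
  also have "\<dots> = add (A i) x (smul (A i) (-1) x)"
    using smul1 x by simp
  also have "\<dots> = zer (A i)"
    using add_neg x by blast
  finally show ?thesis .
qed

definition cen :: "'i \<Rightarrow> 'a \<Rightarrow> 'a" where
  "cen i b = add (A i) b (smul (A i) (- \<phi> i b) (one (A i)))"

lemma cen_carr[simp]: "b \<in> carr (A i) \<Longrightarrow> cen i b \<in> carr (A i)"
  unfolding cen_def by simp

lemma phi_cen[simp]: assumes b: "b \<in> carr (A i)" shows "\<phi> i (cen i b) = 0"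
proof -
  have "\<phi> i (cen i b) = \<phi> i b + (- \<phi> i b) * \<phi> i (one (A i))"
    using st[of i] b unfolding is_state_def cen_def by simp
  then show ?thesis using st[of i] unfolding is_state_def by simp
qed

lemma decomp: assumes b: "b \<in> carr (A i)"
  shows "add (A i) (smul (A i) c (one (A i))) (add (A i) b (smul (A i) (-c) (one (A i)))) = b"
proof -
  let ?o = "one (A i)" and ?ad = "add (A i)" and ?s = "smul (A i)"
  have c1: "?s c ?o \<in> carr (A i)" "?s (-c) ?o \<in> carr (A i)" by simp_all
  have "?ad (?s c ?o) (?ad b (?s (-c) ?o)) = ?ad (?ad b (?s (-c) ?o)) (?s c ?o)"
    using add_comm b c1 by simp
  also have "\<dots> = ?ad b (?ad (?s (-c) ?o) (?s c ?o))"
    using add_assoc b c1 by simp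
  also have "?ad (?s (-c) ?o) (?s c ?o) = ?s (-c + c) ?o"
    using smul_distr[of i] one_carr[of i] by metis
  also have "\<dots> = zer (A i)" using smul0[of "?o" i] by simp
  also have "?ad b (zer (A i)) = ?ad (zer (A i)) b"
    using add_comm b zer_carr by blast
  also have "\<dots> = b" using zer_add b by blast
  finally show ?thesis .
qed

lemma lin_add: "valid_word A u \<Longrightarrow> valid_word A v \<Longrightarrow> a \<in> carr (A i) \<Longrightarrow> b \<in> carr (A i) \<Longrightarrow>
        \<psi> (u @ (i, add (A i) a b) # v) = \<psi> (u @ (i, a) # v) + \<psi> (u @ (i, b) # v)"
  using lin unfolding free_prod_functional_def by blast
lemma lin_smul: "valid_word A u \<Longrightarrow> valid_word A v \<Longrightarrow> a \<in> carr (A i) \<Longrightarrow>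
        \<psi> (u @ (i, smul (A i) c a) # v) = c * \<psi> (u @ (i, a) # v)"
  using lin unfolding free_prod_functional_def by blast
lemma lin_mul: "valid_word A u \<Longrightarrow> valid_word A v \<Longrightarrow> a \<in> carr (A i) \<Longrightarrow> b \<in> carr (A i) \<Longrightarrow>
        \<psi> (u @ (i, a) # (i, b) # v) = \<psi> (u @ (i, mul (A i) a b) # v)"
  using lin unfolding free_prod_functional_def by blast

lemma psplit: assumes p: "valid_word A p" and q: "valid_word A q" and b: "b \<in> carr (A j)"
  shows "\<psi> (p @ (j,b) # q) = \<phi> j b * \<psi> (p @ (j, one (A j)) # q) + \<psi> (p @ (j, cen j b) # q)"
proof -
  have "\<psi> (p @ (j,b) # q) = \<psi> (p @ (j, add (A j) (smul (A j) (\<phi> j b) (one (A j))) (cen j b)) # q)"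
    using decomp[OF b, of "\<phi> j b"] by (simp add: cen_def)
  also have "\<dots> = \<psi> (p @ (j, smul (A j) (\<phi> j b) (one (A j))) # q) + \<psi> (p @ (j, cen j b) # q)"
    using lin_add p q b by simp
  also have "\<psi> (p @ (j, smul (A j) (\<phi> j b) (one (A j))) # q) = \<phi> j b * \<psi> (p @ (j, one (A j)) # q)"
    using lin_smul p q by simp
  finally show ?thesis .
qed

fun nrm :: "('i \<times> 'a) list \<Rightarrow> ('i \<times> 'a) list" where
  "nrm [] = []"
| "nrm [x] = [x]"
| "nrm ((i,a)#(j,b)#w) = (if i = j then nrm ((i, mul (A i) a b)#w) else (i,a) # nrm ((j,b)#w))"

lemma nrm_hd: "w \<noteq> [] \<Longrightarrow> nrm w \<noteq> [] \<and> fst (hd (nrm w)) = fst (hd w)"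
  by (induction w rule: nrm.induct) auto

lemma nrm_alt: "alternating (nrm w)"
proof (induction w rule: nrm.induct)
  case (3 i a j b w)
  then show ?case using nrm_hd[of "(j,b)#w"] by (auto simp: alt_Cons)
qed (auto simp: alt_Cons)

lemma nrm_valid: "valid_word A w \<Longrightarrow> valid_word A (nrm w)"
  by (induction w rule: nrm.induct) auto

lemma nrm_psi: "valid_word A p \<Longrightarrow> valid_word A w \<Longrightarrow> \<psi> (p @ nrm w) = \<psi> (p @ w)"
proof (induction w arbitrary: p rule: nrm.induct)
  case (3 i a j b w)
  show ?case
  proof (cases "i = j")
    case True
    then show ?thesis using 3 lin_mul[of p w a i b] by simp
  next
    case False
    then show ?thesis using 3(2)[of "p @ [(i,a)]"] 3(3,4) by simp
  qed
qed auto

end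


context mp begin

lemma alt_swap: "alternating (p @ (j,x) # q) = alternating (p @ (j,y) # q)"
  by (rule alt_map) simp

lemma Zall: "c \<noteq> [] \<Longrightarrow> valid_word A c \<Longrightarrow> (\<forall>(j,x)\<in>set c. \<phi> j x = 0) \<Longrightarrow> valid_word A w \<Longrightarrow>
  alternating (c @ w) \<Longrightarrow> (w = [] \<or> \<not> sorted_wrt (<) (map fst c @ [fst (hd w)])) \<Longrightarrow> \<psi> (c @ w) = 0"
proof (induction w arbitrary: c)
  case Nil
  then show ?case using centered[of c] by simp
next
  case (Cons jb w')
  obtain j b where jb: "jb = (j,b)" by force
  have b: "b \<in> carr (A j)" and w': "valid_word A w'" using Cons.prems jb by auto
  have ns: "\<not> sorted_wrt (<) (map fst c @ [j])" using Cons.prems jb by simp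
  have sp: "\<psi> (c @ (j,b) # w') = \<phi> j b * \<psi> (c @ (j, one (A j)) # w') + \<psi> (c @ (j, cen j b) # w')"
    using Cons.prems w' b by (intro psplit) auto
  have u: "\<psi> (c @ (j, one (A j)) # w') = 0"
    using unit_rule[of c w' j] Cons.prems w' ns alt_swap[of c j b w' "one (A j)"] jb by simp
  have z: "\<psi> ((c @ [(j, cen j b)]) @ w') = 0"
  proof (rule Cons.IH)
    show "alternating ((c @ [(j, cen j b)]) @ w')"
      using Cons.prems alt_swap[of c j b w' "cen j b"] jb by simp
    show "w' = [] \<or> \<not> sorted_wrt (<) (map fst (c @ [(j, cen j b)]) @ [fst (hd w')])"
      using ns by (auto simp: sorted_wrt_append)
      show "c @ [(j, cen j b)] \<noteq> []" by simp
    show "valid_word A (c @ [(j, cen j b)])" using Cons.prems(2) b by simp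
    show "\<forall>(j, x)\<in>set (c @ [(j, cen j b)]). \<phi> j x = 0" using Cons.prems(3) b by auto
    show "valid_word A w'" by (rule w')
  qed
  show ?case using sp u z jb by simp
qed

lemma Zgen: "c \<noteq> [] \<Longrightarrow> valid_word A c \<Longrightarrow> (\<forall>(j,x)\<in>set c. \<phi> j x = 0) \<Longrightarrow> alternating c \<Longrightarrow>
  valid_word A w \<Longrightarrow> (\<not> sorted_wrt (<) (map fst c) \<or> (w \<noteq> [] \<and> fst (hd w) < fst (last c))) \<Longrightarrow> \<psi> (c @ w) = 0"
proof (induction c arbitrary: w rule: rev_induct)
  case Nil then show ?case by simp
next
  case (snoc x c0)
  show ?case
  proof (cases "w = [] \<or> fst (hd w) \<noteq> fst x")
    case True
    have e: "\<psi> ((c0 @ [x]) @ w) = \<psi> ((c0 @ [x]) @ nrm w)"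
      using nrm_psi[of "c0 @ [x]" w] snoc.prems(2,5) by simp
    have "\<psi> ((c0 @ [x]) @ nrm w) = 0"
    proof (rule Zall)
      show "alternating ((c0 @ [x]) @ nrm w)"
      proof (cases "w = []")
        case True then show ?thesis using snoc.prems(4) by simp
      next
        case False
        then have h: "nrm w \<noteq> []" "fst (hd (nrm w)) \<noteq> fst x" using nrm_hd[of w] \<open>w = [] \<or> fst (hd w) \<noteq> fst x\<close> by auto
        show ?thesis using alt_append[of "c0 @ [x]" "nrm w"] snoc.prems(4) nrm_alt[of w] h by simp
      qed
      show "nrm w = [] \<or> \<not> sorted_wrt (<) (map fst (c0 @ [x]) @ [fst (hd (nrm w))])"
      proof (cases "w = []")
        case False
        then have "fst (hd (nrm w)) = fst (hd w)" using nrm_hd by blast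
        then show ?thesis using snoc.prems(6) False
          by (subst sorted_snoc_iff) auto
      qed simp
    qed (use snoc.prems nrm_valid in auto)
    then show ?thesis using e by simp
  next
    case False
    then obtain z w' where w: "w = (fst x, z) # w'" by (cases w) auto
    obtain k y where x: "x = (k,y)" by force
    have y: "y \<in> carr (A k)" and z: "z \<in> carr (A k)" and w': "valid_word A w'"
      using snoc.prems x w by auto
    have c0: "c0 \<noteq> []"
    proof
      assume "c0 = []"
      then show False using snoc.prems(6) w x by simp
    qed
    have m: "\<psi> ((c0 @ [x]) @ w) = \<psi> (c0 @ (k, mul (A k) y z) # w')"
      using lin_mul[of c0 w' y k z] snoc.prems x w w' by simp
    have altc0: "alternating c0" and lk: "fst (last c0) \<noteq> k"
      using snoc.prems(4) c0 x by (auto simp: alt_append)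
    have ns: "\<not> sorted_wrt (<) (map fst c0 @ [k])" using snoc.prems(6) w x by simp
    have "\<psi> (c0 @ (k, mul (A k) y z) # w') = 0"
    proof (rule snoc.IH)
      show "\<not> sorted_wrt (<) (map fst c0) \<or> ((k, mul (A k) y z) # w' \<noteq> [] \<and> fst (hd ((k, mul (A k) y z) # w')) < fst (last c0))"
        using ns lk c0 by (auto simp: sorted_snoc_iff)
    qed (use snoc.prems c0 altc0 y z w' in auto)
    then show ?thesis using m by simp
  qed
qed

lemma Ugen: "valid_word A c \<Longrightarrow> (\<forall>(j,x)\<in>set c. \<phi> j x = 0) \<Longrightarrow> alternating (c @ [(j, one (A j))]) \<Longrightarrow>
  valid_word A w \<Longrightarrow>
  \<psi> (c @ (j, one (A j)) # w) = (if sorted_wrt (<) (map fst c @ [j]) then \<psi> (c @ w) else 0)"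
proof (cases "w = [] \<or> fst (hd w) \<noteq> j")
  case True
  assume pr: "valid_word A c" "\<forall>(j,x)\<in>set c. \<phi> j x = 0" "alternating (c @ [(j, one (A j))])" "valid_word A w"
  have e: "\<psi> (c @ (j, one (A j)) # w) = \<psi> (c @ (j, one (A j)) # nrm w)"
    using nrm_psi[of "c @ [(j, one (A j))]" w] pr by simp
  have alt: "alternating (c @ (j, one (A j)) # nrm w)"
  proof (cases "w = []")
    case True then show ?thesis using pr(3) by simp
  next
    case False
    then have h: "nrm w \<noteq> []" "fst (hd (nrm w)) \<noteq> j" using nrm_hd[of w] \<open>w = [] \<or> fst (hd w) \<noteq> j\<close> by auto
    show ?thesis using alt_append[of "c @ [(j, one (A j))]" "nrm w"] pr(3) nrm_alt[of w] h by simp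
  qed
  have "\<psi> (c @ (j, one (A j)) # nrm w) = (if sorted_wrt (<) (map fst c @ [j]) then \<psi> (c @ nrm w) else 0)"
    using unit_rule[OF pr(1) nrm_valid[OF pr(4)] alt pr(2)] .
  then show ?thesis using e nrm_psi[of c w] pr by simp
next
  case False
  assume pr: "valid_word A c" "\<forall>(j,x)\<in>set c. \<phi> j x = 0" "alternating (c @ [(j, one (A j))])" "valid_word A w"
  from False obtain z w' where w: "w = (j, z) # w'" by (cases w) auto
  have z: "z \<in> carr (A j)" and w': "valid_word A w'" using pr w by auto
  have e: "\<psi> (c @ (j, one (A j)) # w) = \<psi> (c @ w)"
    using lin_mul[of c w' "one (A j)" j z] pr w z w' by simp
  show ?thesis
  proof (cases "sorted_wrt (<) (map fst c @ [j])")
    case True then show ?thesis using e by simp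
  next
    case ns: False
    have c: "c \<noteq> []" using ns by auto
    have altc: "alternating c" and lk: "fst (last c) \<noteq> j"
      using pr(3) c by (auto simp: alt_append)
    have "\<psi> (c @ w) = 0"
    proof (rule Zgen)
      show "\<not> sorted_wrt (<) (map fst c) \<or> w \<noteq> [] \<and> fst (hd w) < fst (last c)"
        using ns lk c w by (auto simp: sorted_snoc_iff)
    qed (use pr c altc in auto)
    then show ?thesis using e ns by simp
  qed
qed

end


context mp begin

lemma M: "valid_word A c \<Longrightarrow> (\<forall>(j,x)\<in>set c. \<phi> j x = 0) \<Longrightarrow> valid_word A u \<Longrightarrow> valid_word A v \<Longrightarrow>
  a \<in> carr (A i) \<Longrightarrow> alternating (c @ u @ (i,a) # v) \<Longrightarrow> (c @ u = [] \<or> fst (last (c @ u)) < i) \<Longrightarrow>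
  (v = [] \<or> fst (hd v) < i) \<Longrightarrow> \<psi> (c @ u @ (i,a) # v) = \<phi> i a * \<psi> (c @ u @ v)"
proof (induction "length u" arbitrary: c u rule: less_induct)
  case less
  note pr = less.prems
  show ?case
  proof (cases u)
    case Nil
    have sp: "\<psi> (c @ (i,a) # v) = \<phi> i a * \<psi> (c @ (i, one (A i)) # v) + \<psi> (c @ (i, cen i a) # v)"
      using pr by (intro psplit) auto
    have alt1: "alternating (c @ (i, one (A i)) # v)" using pr(6) Nil alt_swap[of c i a v "one (A i)"] by simp
    have u1: "\<psi> (c @ (i, one (A i)) # v) = (if sorted_wrt (<) (map fst c @ [i]) then \<psi> (c @ v) else 0)"
      using unit_rule[OF pr(1) pr(4) alt1 pr(2)] .
    have altc: "alternating c" using pr(6) alt_append by blast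
    have u2: "\<psi> (c @ (i, one (A i)) # v) = \<psi> (c @ v)"
    proof (cases "sorted_wrt (<) (map fst c @ [i])")
      case True then show ?thesis using u1 by simp
    next
      case False
      then have c: "c \<noteq> []" and ns: "\<not> sorted_wrt (<) (map fst c)"
        using pr(7) Nil by (auto simp: sorted_snoc_iff)
      have "\<psi> (c @ v) = 0" using Zgen[OF c pr(1) pr(2) altc pr(4)] ns by simp
      then show ?thesis using u1 False by simp
    qed
    have z: "\<psi> ((c @ [(i, cen i a)]) @ v) = 0"
    proof (rule Zall)
      show "alternating ((c @ [(i, cen i a)]) @ v)" using pr(6) Nil alt_swap[of c i a v "cen i a"] by simp
      show "v = [] \<or> \<not> sorted_wrt (<) (map fst (c @ [(i, cen i a)]) @ [fst (hd v)])"
        using pr(8) by (auto simp: sorted_wrt_append)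
      show "\<forall>(j, x)\<in>set (c @ [(i, cen i a)]). \<phi> j x = 0" using pr(2) pr(5) by auto
    qed (use pr in auto)
    show ?thesis using sp u2 z Nil by simp
  next
    case (Cons jb u')
    obtain j b where jb: "jb = (j,b)" by force
    have b: "b \<in> carr (A j)" and u': "valid_word A u'" using pr(3) Cons jb by auto
    let ?S = "sorted_wrt (<) (map fst c @ [j])"
    have L1: "\<psi> (c @ (j,b) # (u' @ (i,a) # v)) = \<phi> j b * \<psi> (c @ (j, one (A j)) # (u' @ (i,a) # v))
       + \<psi> (c @ (j, cen j b) # (u' @ (i,a) # v))"
      using pr u' b by (intro psplit) auto
    have alt1: "alternating (c @ (j, one (A j)) # (u' @ (i,a) # v))"
      using pr(6) Cons jb alt_swap[of c j b "u' @ (i,a) # v" "one (A j)"] by simp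
    have L2: "\<psi> (c @ (j, one (A j)) # (u' @ (i,a) # v)) = (if ?S then \<psi> (c @ u' @ (i,a) # v) else 0)"
      using unit_rule[OF pr(1) _ alt1 pr(2)] pr u' by simp
    have L3: "\<psi> ((c @ [(j, cen j b)]) @ u' @ (i,a) # v) = \<phi> i a * \<psi> ((c @ [(j, cen j b)]) @ u' @ v)"
    proof (rule less.hyps)
      show "length u' < length u" using Cons by simp
      show "alternating ((c @ [(j, cen j b)]) @ u' @ (i, a) # v)"
        using pr(6) Cons jb alt_swap[of c j b "u' @ (i,a) # v" "cen j b"] by simp
      show "(c @ [(j, cen j b)]) @ u' = [] \<or> fst (last ((c @ [(j, cen j b)]) @ u')) < i"
        using pr(7) Cons jb by (cases "u' = []") auto
      show "\<forall>(j', x)\<in>set (c @ [(j, cen j b)]). \<phi> j' x = 0" using pr(2) b by auto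
    qed (use pr u' b in auto)
    have R1: "\<psi> (c @ (j,b) # (u' @ v)) = \<phi> j b * \<psi> (c @ (j, one (A j)) # (u' @ v))
       + \<psi> (c @ (j, cen j b) # (u' @ v))"
      using pr u' b by (intro psplit) auto
    have altcj: "alternating (c @ [(j, one (A j))])"
      using alt1 alt_append[of "c @ [(j, one (A j))]" "u' @ (i,a) # v"] by simp
    have R2: "\<psi> (c @ (j, one (A j)) # (u' @ v)) = (if ?S then \<psi> (c @ u' @ v) else 0)"
      using Ugen[OF pr(1) pr(2) altcj] pr u' by simp
    have K: "\<psi> (c @ u' @ (i,a) # v) = \<phi> i a * \<psi> (c @ u' @ v)" if S: ?S
    proof (cases u')
      case Nil
      have ji: "j < i" using pr(7) Cons Nil jb by simp
      have lc: "c = [] \<or> fst (last c) < i" using S ji by (auto simp: sorted_snoc_iff)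
      have a6: "alternating c" "alternating ((j,b) # (i,a) # v)"
        using pr(6) Cons Nil jb alt_append[of c "(j,b) # (i,a) # v"] by auto
      have "alternating (c @ [] @ (i,a) # v)"
        using alt_append[of c "(i,a) # v"] a6 lc by (auto simp: alt_Cons)
      then show ?thesis using less.hyps[of "[]" c] pr Nil Cons lc by simp
    next
      case (Cons kb u'')
      obtain k y where kb: "kb = (k,y)" by force
      have y: "y \<in> carr (A k)" and u'': "valid_word A u''" using u' Cons kb by auto
      have lu: "fst (last (c @ u)) = fst (last u')" using \<open>u = jb # u'\<close> Cons by simp
      have a6: "alternating c" "alternating ((j,b) # u' @ (i,a) # v)"
        "c = [] \<or> fst (last c) \<noteq> j"
        using pr(6) \<open>u = jb # u'\<close> jb alt_append[of c "(j,b) # u' @ (i,a) # v"] by auto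
      have a7: "alternating (u' @ (i,a) # v)" using a6(2) by (simp add: alt_Cons)
      show ?thesis
      proof (cases "c = [] \<or> fst (last c) \<noteq> k")
        case True
        have "alternating (c @ u' @ (i,a) # v)"
          using alt_append[of c "u' @ (i,a) # v"] a6 a7 True Cons kb by auto
        then show ?thesis using less.hyps[of u' c] pr u' \<open>u = jb # u'\<close> lu Cons by simp
      next
        case False
        then have cne: "c \<noteq> []" and lk: "fst (last c) = k" by auto
        define c0 where "c0 = butlast c"
        define x where "x = snd (last c)"
        have cdec: "c = c0 @ [(k,x)]" using cne lk unfolding c0_def x_def
          by (metis append_butlast_last_id prod.collapse)
        have x: "x \<in> carr (A k)" and c0v: "valid_word A c0" using pr(1) cdec by auto
        have c0c: "\<forall>(j,x)\<in>set c0. \<phi> j x = 0" using pr(2) cdec by auto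
        have e1: "\<psi> (c @ u' @ (i,a) # v) = \<psi> (c0 @ (k, mul (A k) x y) # (u'' @ (i,a) # v))"
          using lin_mul[of c0 "u'' @ (i,a) # v" x k y] cdec Cons kb x y u'' pr by simp
        have e2: "\<psi> (c @ u' @ v) = \<psi> (c0 @ (k, mul (A k) x y) # (u'' @ v))"
          using lin_mul[of c0 "u'' @ v" x k y] cdec Cons kb x y u'' pr by simp
        have ac: "alternating c0" "c0 = [] \<or> fst (last c0) \<noteq> k"
          using a6(1) cdec alt_append[of c0 "[(k,x)]"] by auto
        have a8: "alternating ((k, mul (A k) x y) # u'' @ (i,a) # v)"
          using a7 Cons kb alt_swap[of "[]" k y "u'' @ (i,a) # v" "mul (A k) x y"] by simp
        have a9: "alternating (c0 @ ((k, mul (A k) x y) # u'') @ (i,a) # v)"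
          using alt_append[of c0 "(k, mul (A k) x y) # u'' @ (i,a) # v"] ac a8 by auto
        have l9: "c0 @ ((k, mul (A k) x y) # u'') = [] \<or> fst (last (c0 @ ((k, mul (A k) x y) # u''))) < i"
        proof -
          have "fst (last (c0 @ ((k, mul (A k) x y) # u''))) = fst (last u')"
            using Cons kb by (cases "u'' = []") auto
          moreover have "fst (last u') < i" using pr(7) lu \<open>u = jb # u'\<close> by auto
          ultimately show ?thesis by simp
        qed
        have "\<psi> (c0 @ ((k, mul (A k) x y) # u'') @ (i,a) # v) = \<phi> i a * \<psi> (c0 @ ((k, mul (A k) x y) # u'') @ v)"
          by (rule less.hyps) (use \<open>u = jb # u'\<close> Cons c0v c0c x y u'' pr a9 l9 in auto)
        then show ?thesis using e1 e2 by simp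
      qed
    qed
    show ?thesis
    proof (cases ?S)
      case True
      show ?thesis using L1 L2 L3 R1 R2 K[OF True] True Cons jb by (simp add: algebra_simps)
    next
      case False
      show ?thesis using L1 L2 L3 R1 R2 False Cons jb by (simp add: algebra_simps)
    qed
  qed
qed

end

theorem theorem2p3:
  fixes A :: "'i::linorder \<Rightarrow> 'a star_alg"
    and \<phi> :: "'i \<Rightarrow> 'a \<Rightarrow> complex"
    and \<psi> :: "('i \<times> 'a) list \<Rightarrow> complex"
  assumes ncps: "\<And>i. nc_prob_space (A i) (\<phi> i)"
    and lin: "free_prod_functional A \<psi>"
    and empty: "\<psi> [] = 1"
    and restr: "\<And>i a. a \<in> carr (A i) \<Longrightarrow> \<psi> [(i, a)] = \<phi> i a"
    and centered: "\<And>w. w \<noteq> [] \<Longrightarrow> valid_word A w \<Longrightarrow> alternating w \<Longrightarrow>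
                     (\<forall>(j, a)\<in>set w. \<phi> j a = 0) \<Longrightarrow> \<psi> w = 0"
    and unit_rule: "\<And>u i v. valid_word A u \<Longrightarrow> valid_word A v \<Longrightarrow>
                     alternating (u @ (i, one (A i)) # v) \<Longrightarrow>
                     (\<forall>(j, a)\<in>set u. \<phi> j a = 0) \<Longrightarrow>
                     \<psi> (u @ (i, one (A i)) # v) =
                       (if sorted_wrt (<) (map fst u @ [i]) then \<psi> (u @ v) else 0)"
  shows "\<And>u i a v. valid_word A u \<Longrightarrow> valid_word A v \<Longrightarrow> a \<in> carr (A i) \<Longrightarrow>
           alternating (u @ (i, a) # v) \<Longrightarrow>
           (u = [] \<or> fst (last u) < i) \<Longrightarrow> (v = [] \<or> fst (hd v) < i) \<Longrightarrow>
           \<psi> (u @ (i, a) # v) = \<phi> i a * \<psi> (u @ v)"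
proof -
  interpret mp A \<phi> \<psi> by (rule mp.intro[OF ncps lin empty restr centered unit_rule])
  fix u i a v
  assume h: "valid_word A u" "valid_word A v" "a \<in> carr (A i)"
    "alternating (u @ (i, a) # v)" "u = [] \<or> fst (last u) < i" "v = [] \<or> fst (hd v) < i"
  show "\<psi> (u @ (i, a) # v) = \<phi> i a * \<psi> (u @ v)"
    using M[of "[]" u v a i] h by simp
qed

end
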